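(* Let $G$ be a connected graph with maximum degree $\Delta$ and minimum degree $\delta\geq 2$. If $\Delta-\delta\leq (2\delta-1)^{2}$, then $GA(G)>ABC(G)$.
   Context: All graphs are finite, simple and undirected. For a graph $G$ with vertex degrees $d_i$ (degree of vertex $v_i$), the first geometric-arithmetic index is $GA(G)=\sum_{v_iv_j\in E(G)}\frac{2\sqrt{d_id_j}}{d_i+d_j}$ and the atom-bond connectivity index is $ABC(G)=\sum_{v_iv_j\in E(G)}\sqrt{\frac{d_i+d_j-2}{d_id_j}}$. *)

theory Defs
  imports Complex_Main
begin

definition simple_graph :: "'a set \<Rightarrow> 'a set set \<Rightarrow> bool" where
  "simple_graph V E \<longleftrightarrow> finite V \<and> (\<forall>e\<in>E. e \<subseteq> V \<and> card e = 2)"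

definition adj :: "'a set set \<Rightarrow> 'a \<Rightarrow> 'a \<Rightarrow> bool" where
  "adj E u v \<longleftrightarrow> {u, v} \<in> E"

definition degree :: "'a set set \<Rightarrow> 'a \<Rightarrow> nat" where
  "degree E v = card {e \<in> E. v \<in> e}"

definition connected_graph :: "'a set \<Rightarrow> 'a set set \<Rightarrow> bool" where
  "connected_graph V E \<longleftrightarrow> V \<noteq> {} \<and> (\<forall>u\<in>V. \<forall>v\<in>V. (adj E)\<^sup>*\<^sup>* u v)"

definition max_degree :: "'a set \<Rightarrow> 'a set set \<Rightarrow> nat" where
  "max_degree V E = Max (degree E ` V)"

definition min_degree :: "'a set \<Rightarrow> 'a set set \<Rightarrow> nat" where
  "min_degree V E = Min (degree E ` V)"

definition GA_index :: "'a set set \<Rightarrow> real" where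
  "GA_index E = (\<Sum>e\<in>E. 2 * sqrt (\<Prod>x\<in>e. real (degree E x)) / (\<Sum>x\<in>e. real (degree E x)))"

definition ABC_index :: "'a set set \<Rightarrow> real" where
  "ABC_index E = (\<Sum>e\<in>E. sqrt (((\<Sum>x\<in>e. real (degree E x)) - 2) / (\<Prod>x\<in>e. real (degree E x))))"

end

theory Submission
  imports Defs
begin

lemma poly_key:
  fixes a s :: real
  assumes a: "a \<ge> 2" and s0: "s \<ge> 0" and sm: "s \<le> (2*a-1)^2"
  shows "4*a^4 - 8*a^3 + 8*a^2 + s*(8*a^3 - 12*a^2 + 8*a) + s^2*(4*a^2 - 6*a + 2) - s^3 > 0"
proof -
  define m where "m = (2*a-1)^2"
  define c1 where "c1 = 8*a^3 - 12*a^2 + 8*a"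
  define g0 where "g0 = 4*a^4 - 8*a^3 + 8*a^2"
  have g0p: "g0 > 0" unfolding g0_def
  proof -
    have "4*a^4 - 8*a^3 + 8*a^2 = 4*a^2*((a-1)^2 + 1)" by (simp add: power2_eq_square power3_eq_cube power4_eq_xxxx algebra_simps)
    also have "... > 0" using a by (intro mult_pos_pos) (auto simp: add_nonneg_pos)
    finally show "4*a^4 - 8*a^3 + 8*a^2 > 0" .
  qed
  have gm: "g0 + m*(c1 - m*(2*a-1)) > 0"
  proof -
    have "g0 + m*(c1 - m*(2*a-1)) = 4*a^4 + 4*a^2 - 2*a + 1"
      unfolding g0_def m_def c1_def by (simp add: power2_eq_square power3_eq_cube power4_eq_xxxx algebra_simps)
    also have "... > 0"
    proof -
      have "4*a^2 - 2*a = 2*a*(2*a-1)" by (simp add: power2_eq_square algebra_simps)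
      also have "... \<ge> 0" using a by simp
      finally have "4*a^2 - 2*a \<ge> 0" .
      moreover have "a^4 \<ge> 0" by simp
      ultimately show ?thesis by linarith
    qed
    finally show ?thesis .
  qed
  have s3: "s^3 \<le> s^2 * m"
  proof -
    have "s^3 = s^2 * s" by (simp add: power2_eq_square power3_eq_cube)
    also have "... \<le> s^2 * m" using sm m_def by (intro mult_left_mono) auto
    finally show ?thesis .
  qed
  have e: "4*a^2 - 6*a + 2 - m = -(2*a-1)" unfolding m_def by (simp add: power2_eq_square algebra_simps)
  have "4*a^4 - 8*a^3 + 8*a^2 + s*(8*a^3 - 12*a^2 + 8*a) + s^2*(4*a^2 - 6*a + 2) - s^3
        \<ge> g0 + s*c1 - s^2*(2*a-1)"
  proof -
    have e2: "s^2*(4*a^2 - 6*a + 2) = s^2*m - s^2*(2*a-1)"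
      using e by (metis add_diff_cancel_left' diff_add_cancel right_diff_distrib' uminus_add_conv_diff diff_minus_eq_add)
    show ?thesis using s3 e2 unfolding g0_def c1_def by linarith
  qed
  moreover have "s^2*(2*a-1) \<le> s*m*(2*a-1)"
  proof -
    have "s^2 \<le> s*m" using sm s0 m_def by (simp add: power2_eq_square mult_left_mono)
    then show ?thesis using a by (intro mult_right_mono) auto
  qed
  moreover have "g0 + s*(c1 - m*(2*a-1)) > 0"
  proof (cases "c1 - m*(2*a-1) \<ge> 0")
    case True then show ?thesis using g0p s0 by (simp add: add_pos_nonneg)
  next
    case False
    have "s*(c1 - m*(2*a-1)) \<ge> m*(c1 - m*(2*a-1))"
      using False sm m_def by (intro mult_right_mono_neg) auto
    then show ?thesis using gm by linarith
  qed
  ultimately show ?thesis by (simp add: algebra_simps)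
qed

lemma edge_le:
  fixes a b :: real
  assumes a: "a \<ge> 2" and ab: "a \<le> b" and bm: "b - a \<le> (2*a-1)^2"
  shows "sqrt ((a+b-2)/(a*b)) < 2*sqrt(a*b)/(a+b)"
proof -
  define s where "s = b - a"
  have bs: "b = a + s" unfolding s_def by simp
  have poly: "(a+b)^2*(a+b-2) < 4*(a*b)*(a*b)"
  proof -
    have "4*(a*b)*(a*b) - (a+b)^2*(a+b-2) = 4*a^4 - 8*a^3 + 8*a^2 + s*(8*a^3 - 12*a^2 + 8*a) + s^2*(4*a^2 - 6*a + 2) - s^3"
      unfolding bs by (simp add: power2_eq_square power3_eq_cube power4_eq_xxxx algebra_simps)
    also have "... > 0" using poly_key[of a s] a ab bm s_def by simp
    finally show ?thesis by simp
  qed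
  have ap: "a > 0" "b > 0" using a ab by auto
  have pab: "a*b > 0" using ap by simp
  have pab2: "(a+b)^2 > 0" using ap by simp
  have "(a+b-2)/(a*b) < 4*(a*b)/(a+b)^2"
    using poly pab pab2 by (simp add: divide_simps mult.commute mult.left_commute)
  then have "sqrt ((a+b-2)/(a*b)) < sqrt (4*(a*b)/(a+b)^2)" by simp
  also have "sqrt (4*(a*b)/(a+b)^2) = 2*sqrt(a*b)/(a+b)"
    using ap by (simp add: real_sqrt_divide real_sqrt_mult)
  finally show ?thesis .
qed

lemma edge_gen:
  fixes a b d D :: real
  assumes "2 \<le> d" "d \<le> a" "d \<le> b" "a \<le> D" "b \<le> D" "D - d \<le> (2*d-1)^2"
  shows "sqrt ((a+b-2)/(a*b)) < 2*sqrt(a*b)/(a+b)"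
proof -
  have mono: "(2*d-1)^2 \<le> (2*x-1)^2" if "d \<le> x" for x
    using assms that by (intro power_mono) auto
  show ?thesis
  proof (cases "a \<le> b")
    case True
    then show ?thesis using edge_le[of a b] mono[of a] assms by linarith
  next
    case False
    then have "sqrt ((b+a-2)/(b*a)) < 2*sqrt(b*a)/(b+a)"
      using edge_le[of b a] mono[of b] assms by linarith
    then show ?thesis by (simp add: add.commute mult.commute)
  qed
qed

theorem theorem3p4:
  fixes V :: "'a set" and E :: "'a set set"
  assumes "simple_graph V E"
    and "connected_graph V E"
    and "min_degree V E \<ge> 2"
    and "real (max_degree V E) - real (min_degree V E) \<le> (2 * real (min_degree V E) - 1)^2"
  shows "GA_index E > ABC_index E"
proof -
  have fV: "finite V" and EV: "\<And>e. e \<in> E \<Longrightarrow> e \<subseteq> V \<and> card e = 2"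
    using assms(1) unfolding simple_graph_def by auto
  have Vne: "V \<noteq> {}" using assms(2) unfolding connected_graph_def by auto
  have fE: "finite E"
  proof (rule finite_subset[of E "Pow V"])
    show "E \<subseteq> Pow V" using EV by auto
  qed (use fV in auto)
  define d where "d = real (min_degree V E)"
  define D where "D = real (max_degree V E)"
  have dlo: "d \<le> real (degree E v)" if "v \<in> V" for v
    unfolding d_def min_degree_def using fV that by simp
  have dhi: "real (degree E v) \<le> D" if "v \<in> V" for v
    unfolding D_def max_degree_def using fV that by simp
  have d2: "2 \<le> d" using assms(3) unfolding d_def by simp
  have Ene: "E \<noteq> {}"
  proof
    assume "E = {}"
    obtain v where "v \<in> V" using Vne by auto
    then have "2 \<le> real (degree E v)" using dlo d2 by force
    moreover have "degree E v = 0" using \<open>E = {}\<close> unfolding degree_def by simp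
    ultimately show False by simp
  qed
  have edge: "sqrt (((\<Sum>x\<in>e. real (degree E x)) - 2) / (\<Prod>x\<in>e. real (degree E x)))
      < 2 * sqrt (\<Prod>x\<in>e. real (degree E x)) / (\<Sum>x\<in>e. real (degree E x))" if eE: "e \<in> E" for e
  proof -
    obtain u v where e: "e = {u, v}" "u \<noteq> v" using EV[OF eE] by (meson card_2_iff)
    have uv: "u \<in> V" "v \<in> V" using EV[OF eE] e by auto
    have "sqrt ((real (degree E u) + real (degree E v) - 2) / (real (degree E u) * real (degree E v)))
       < 2 * sqrt (real (degree E u) * real (degree E v)) / (real (degree E u) + real (degree E v))"
      using edge_gen[of d "real (degree E u)" "real (degree E v)" D] d2 dlo dhi uv assms(4)
      unfolding d_def D_def by (simp add: d_def D_def)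
    then show ?thesis using e by simp
  qed
  show ?thesis unfolding GA_index_def ABC_index_def
    by (rule sum_strict_mono[OF fE Ene]) (use edge in auto)
qed

end
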